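(* Let $\Omega\subset\mathbb{R}^3$ be a domain and let $\varphi:\Omega\to\mathbb{C}$ be a twice differentiable function with $\varphi\neq 0$ in $\Omega$. Put $\vec\alpha=\frac{\operatorname{grad}\varphi}{\varphi}$ and $v=\frac{\Delta\varphi}{\varphi}$, so that $\varphi$ solves the Schrödinger equation $-\Delta\varphi+v\varphi=0$. Let $\psi:\Omega\to\mathbb{C}$ be a twice differentiable function which is another solution of $-\Delta\psi+v\psi=0$ in $\Omega$. Then the function $$\vec f=(D-\vec\alpha)\psi=D\psi-\vec\alpha\,\psi$$ satisfies $(D+M^{\vec\alpha})\vec f=0$, i.e. $D\vec f+\vec f\cdot\vec\alpha=0$, in $\Omega$.
   Context: $\mathbb{H}(\mathbb{C})$ denotes the algebra of complex quaternions (biquaternions) $q=\sum_{k=0}^3 q_k i_k$, $q_k\in\mathbb{C}$, where $i_0=1$ and $i_1,i_2,i_3$ are the standard quaternionic imaginary units; vector parts $\vec q=\sum_{k=1}^3q_ki_k$ are identified with vectors of $\mathbb{C}^3$, and the product is $p\cdot q=p_0q_0-\langle\vec p,\vec q\rangle+[\vec p\times\vec q]+p_0\vec q+q_0\vec p$. For a biquaternion $p$, $M^p$ denotes right multiplication: $M^pq=q\cdot p$. The Moisil–Theodoresco operator is $Df=\sum_{k=1}^3 i_k\partial_k f$; for a scalar function $\psi$, $D\psi=\operatorname{grad}\psi$, and for $f=f_0+\vec f$, $Df=-\operatorname{div}\vec f+\operatorname{grad}f_0+\operatorname{rot}\vec f$. *)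

theory Defs
  imports "HOL-Analysis.Analysis"
begin

text \<open>Complex quaternions (biquaternions) q = q0 + q1 i1 + q2 i2 + q3 i3, qk complex.\<close>
datatype bq = BQ (sc: complex) (c1: complex) (c2: complex) (c3: complex)

definition bq_zero :: bq where "bq_zero = BQ 0 0 0 0"
definition bq_add :: "bq \<Rightarrow> bq \<Rightarrow> bq" where
  "bq_add p q = BQ (sc p + sc q) (c1 p + c1 q) (c2 p + c2 q) (c3 p + c3 q)"
definition bq_sub :: "bq \<Rightarrow> bq \<Rightarrow> bq" where
  "bq_sub p q = BQ (sc p - sc q) (c1 p - c1 q) (c2 p - c2 q) (c3 p - c3 q)"
definition bq_scale :: "complex \<Rightarrow> bq \<Rightarrow> bq" where
  "bq_scale a q = BQ (a * sc q) (a * c1 q) (a * c2 q) (a * c3 q)"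

text \<open>p q = p0 q0 - <p,q> + [p x q] + p0 q + q0 p (bilinear inner product, no conjugation).\<close>
definition bq_mult :: "bq \<Rightarrow> bq \<Rightarrow> bq" where
  "bq_mult p q = BQ
     (sc p * sc q - (c1 p * c1 q + c2 p * c2 q + c3 p * c3 q))
     (c2 p * c3 q - c3 p * c2 q + sc p * c1 q + sc q * c1 p)
     (c3 p * c1 q - c1 p * c3 q + sc p * c2 q + sc q * c2 p)
     (c1 p * c2 q - c2 p * c1 q + sc p * c3 q + sc q * c3 p)"

definition Mright :: "bq \<Rightarrow> bq \<Rightarrow> bq" where "Mright p q = bq_mult q p"

definition i1 :: bq where "i1 = BQ 0 1 0 0"
definition i2 :: bq where "i2 = BQ 0 0 1 0"
definition i3 :: bq where "i3 = BQ 0 0 0 1"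

definition pd :: "3 \<Rightarrow> (real^3 \<Rightarrow> complex) \<Rightarrow> real^3 \<Rightarrow> complex" where
  "pd k g x = vector_derivative (\<lambda>t. g (x + t *\<^sub>R axis k 1)) (at 0)"

definition pdq :: "3 \<Rightarrow> (real^3 \<Rightarrow> bq) \<Rightarrow> real^3 \<Rightarrow> bq" where
  "pdq k f x = BQ (pd k (\<lambda>y. sc (f y)) x) (pd k (\<lambda>y. c1 (f y)) x)
                  (pd k (\<lambda>y. c2 (f y)) x) (pd k (\<lambda>y. c3 (f y)) x)"

definition MT :: "(real^3 \<Rightarrow> bq) \<Rightarrow> real^3 \<Rightarrow> bq" where
  "MT f x = bq_add (bq_mult i1 (pdq 1 f x))
              (bq_add (bq_mult i2 (pdq 2 f x)) (bq_mult i3 (pdq 3 f x)))"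

definition scal :: "(real^3 \<Rightarrow> complex) \<Rightarrow> real^3 \<Rightarrow> bq" where
  "scal g x = BQ (g x) 0 0 0"

definition lap :: "(real^3 \<Rightarrow> complex) \<Rightarrow> real^3 \<Rightarrow> complex" where
  "lap g x = pd 1 (pd 1 g) x + pd 2 (pd 2 g) x + pd 3 (pd 3 g) x"

definition twice_diff_on :: "(real^3 \<Rightarrow> complex) \<Rightarrow> (real^3) set \<Rightarrow> bool" where
  "twice_diff_on g S \<longleftrightarrow> (\<forall>x\<in>S. g differentiable (at x) \<and>
      (\<forall>k. (pd k g) differentiable (at x)))"

end

theory Submission imports Defs begin

lemma pd_hasd:
  assumes "(g has_derivative g') (at y)"
  shows "pd k g y = g' (axis k 1)"
proof -
  have d1: "((\<lambda>t. y + t *\<^sub>R axis k 1) has_derivative (\<lambda>s. s *\<^sub>R axis k 1)) (at 0)"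
    by (auto intro!: derivative_eq_intros)
  have d2: "(g has_derivative g') (at (y + (0::real) *\<^sub>R axis k 1))" using assms by simp
  have lin: "linear g'" using assms has_derivative_linear by blast
  have "((\<lambda>t. g (y + t *\<^sub>R axis k 1)) has_derivative (\<lambda>s. g' (s *\<^sub>R axis k 1))) (at 0)"
    using has_derivative_compose[OF d1 d2] by simp
  then have "((\<lambda>t. g (y + t *\<^sub>R axis k 1)) has_vector_derivative g' (axis k 1)) (at 0)"
    unfolding has_vector_derivative_def using linear_scale[OF lin] by simp
  then show ?thesis unfolding pd_def by (rule vector_derivative_at)
qed

lemma pd_vd:
  fixes g :: "real^3 \<Rightarrow> complex"
  assumes "g differentiable (at (c + t *\<^sub>R axis j 1))"
  shows "((\<lambda>s. g (c + s *\<^sub>R axis j 1)) has_vector_derivative pd j g (c + t *\<^sub>R axis j 1)) (at t)"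
proof -
  obtain g' where g': "(g has_derivative g') (at (c + t *\<^sub>R axis j 1))"
    using assms differentiable_def by blast
  have d1: "((\<lambda>s. c + s *\<^sub>R axis j 1) has_derivative (\<lambda>s. s *\<^sub>R axis j 1)) (at t)"
    by (auto intro!: derivative_eq_intros)
  have lin: "linear g'" using g' has_derivative_linear by blast
  have "((\<lambda>s. g (c + s *\<^sub>R axis j 1)) has_derivative (\<lambda>s. g' (s *\<^sub>R axis j 1))) (at t)"
    using has_derivative_compose[OF d1 g'] by simp
  then show ?thesis
    unfolding has_vector_derivative_def pd_hasd[OF g'] using linear_scale[OF lin] by simp
qed

lemma pd_const[simp]: "pd k (\<lambda>y. c) x = 0"
  unfolding pd_def by simp

lemma pd_diff:
  assumes "g differentiable (at x)" "h differentiable (at x)"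
  shows "pd k (\<lambda>y. g y - h y) x = pd k g x - pd k h x"
proof -
  obtain g' h' where a: "(g has_derivative g') (at x)" "(h has_derivative h') (at x)"
    using assms differentiable_def by metis
  show ?thesis
    using pd_hasd[OF has_derivative_diff[OF a]] pd_hasd[OF a(1)] pd_hasd[OF a(2)] by simp
qed

lemma pd_add:
  assumes "g differentiable (at x)" "h differentiable (at x)"
  shows "pd k (\<lambda>y. g y + h y) x = pd k g x + pd k h x"
proof -
  obtain g' h' where a: "(g has_derivative g') (at x)" "(h has_derivative h') (at x)"
    using assms differentiable_def by metis
  show ?thesis
    using pd_hasd[OF has_derivative_add[OF a]] pd_hasd[OF a(1)] pd_hasd[OF a(2)] by simp
qed

lemma pd_mult:
  fixes g h :: "real^3 \<Rightarrow> complex"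
  assumes "g differentiable (at x)" "h differentiable (at x)"
  shows "pd k (\<lambda>y. g y * h y) x = g x * pd k h x + pd k g x * h x"
proof -
  obtain g' h' where a: "(g has_derivative g') (at x)" "(h has_derivative h') (at x)"
    using assms differentiable_def by metis
  show ?thesis
    using pd_hasd[OF has_derivative_mult[OF a]] pd_hasd[OF a(1)] pd_hasd[OF a(2)] by simp
qed

lemma pd_divide:
  fixes g h :: "real^3 \<Rightarrow> complex"
  assumes "g differentiable (at x)" "h differentiable (at x)" "h x \<noteq> 0"
  shows "pd k (\<lambda>y. g y / h y) x = (pd k g x * h x - g x * pd k h x) / (h x * h x)"
proof -
  obtain g' h' where a: "(g has_derivative g') (at x)" "(h has_derivative h') (at x)"
    using assms differentiable_def by metis
  show ?thesis
    using pd_hasd[OF has_derivative_divide'[OF a assms(3)]] pd_hasd[OF a(1)] pd_hasd[OF a(2)] by simp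
qed

lemma norm_axis1: "norm (axis k (1::real) :: real^3) = 1"
  by simp

lemma young_half:
  fixes g :: "real^3 \<Rightarrow> complex"
  assumes S: "\<And>y. y \<in> ball x r \<Longrightarrow> g differentiable (at y)" and r: "r > 0"
    and G: "(pd j g) differentiable (at x)" and e: "e > 0"
  shows "\<exists>d>0. \<forall>h. 0 < h \<and> h < d \<longrightarrow>
     norm (g (x + h *\<^sub>R axis k 1 + h *\<^sub>R axis j 1) - g (x + h *\<^sub>R axis j 1)
       - g (x + h *\<^sub>R axis k 1) + g x - (h * h) *\<^sub>R pd k (pd j g) x) \<le> e * (h * h)"
proof -
  define u :: "real^3" where "u = axis j 1"
  define w :: "real^3" where "w = axis k 1"
  have nu: "norm u = 1" and nw: "norm w = 1" unfolding u_def w_def by (simp_all add: norm_axis1)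
  obtain G' where G': "(pd j g has_derivative G') (at x)"
    using G differentiable_def by blast
  have pk: "pd k (pd j g) x = G' w" unfolding w_def by (rule pd_hasd[OF G'])
  have lin: "linear G'" using G' has_derivative_linear by blast
  obtain d0 where d0: "d0 > 0" and
    d0b: "\<And>y. norm (y - x) < d0 \<Longrightarrow> norm (pd j g y - pd j g x - G' (y - x)) \<le> (e/4) * norm (y - x)"
    using G' e unfolding has_derivative_at_alt by (meson divide_pos_pos zero_less_numeral)
  define d where "d = min (d0/2) (r/2)"
  have "d > 0" using d0 r by (simp add: d_def)
  moreover have "norm (g (x + h *\<^sub>R w + h *\<^sub>R u) - g (x + h *\<^sub>R u)
       - g (x + h *\<^sub>R w) + g x - (h * h) *\<^sub>R G' w) \<le> e * (h * h)" if h: "0 < h" "h < d" for h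
  proof -
    define \<psi> where "\<psi> t = g ((x + h *\<^sub>R w) + t *\<^sub>R u) - g (x + t *\<^sub>R u) - t *\<^sub>R (h *\<^sub>R G' w)" for t :: real
    define D where "D t = pd j g ((x + h *\<^sub>R w) + t *\<^sub>R u) - pd j g (x + t *\<^sub>R u) - h *\<^sub>R G' w" for t :: real
    have inb1: "(x + h *\<^sub>R w) + t *\<^sub>R u \<in> ball x r" and inb2: "x + t *\<^sub>R u \<in> ball x r"
      and nb1: "norm (((x + h *\<^sub>R w) + t *\<^sub>R u) - x) < d0" and nb2: "norm ((x + t *\<^sub>R u) - x) < d0"
      if t: "0 \<le> t" "t \<le> h" for t
    proof -
      have "norm (h *\<^sub>R w + t *\<^sub>R u) \<le> h + t"
        using norm_triangle_ineq[of "h *\<^sub>R w" "t *\<^sub>R u"] nu nw t h by simp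
      moreover have "norm (t *\<^sub>R u) \<le> h" using nu t by simp
      moreover have "norm (t *\<^sub>R u + h *\<^sub>R w) = norm (h *\<^sub>R w + t *\<^sub>R u)" by (simp add: add.commute)
      ultimately show "(x + h *\<^sub>R w) + t *\<^sub>R u \<in> ball x r" "x + t *\<^sub>R u \<in> ball x r"
        "norm (((x + h *\<^sub>R w) + t *\<^sub>R u) - x) < d0" "norm ((x + t *\<^sub>R u) - x) < d0"
        using t h unfolding d_def by (auto simp: dist_norm add.assoc norm_minus_commute)
    qed
    have vd: "(\<psi> has_vector_derivative D t) (at t)" if t: "0 \<le> t" "t \<le> h" for t
    proof -
      have a1: "((\<lambda>s. g ((x + h *\<^sub>R w) + s *\<^sub>R u)) has_vector_derivative pd j g ((x + h *\<^sub>R w) + t *\<^sub>R u)) (at t)"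
        unfolding u_def by (rule pd_vd) (use S inb1[OF t] in \<open>simp add: u_def\<close>)
      have a2: "((\<lambda>s. g (x + s *\<^sub>R u)) has_vector_derivative pd j g (x + t *\<^sub>R u)) (at t)"
        unfolding u_def by (rule pd_vd) (use S inb2[OF t] in \<open>simp add: u_def\<close>)
      have a3: "((\<lambda>s. s *\<^sub>R (h *\<^sub>R G' w)) has_vector_derivative (h *\<^sub>R G' w)) (at t)"
        unfolding has_vector_derivative_def by (rule bounded_linear_imp_has_derivative[OF bounded_linear_scaleR_left])
      show ?thesis unfolding \<psi>_def D_def
        by (intro has_vector_derivative_diff a1 a2 a3)
    qed
    have cont: "continuous_on {0..h} \<psi>"
      using vd by (meson atLeastAtMost_iff continuous_at_imp_continuous_on has_vector_derivative_continuous)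
    obtain \<xi> where \<xi>: "\<xi> \<in> {0<..<h}" and mv: "norm (\<psi> h - \<psi> 0) \<le> norm ((h - 0) *\<^sub>R D \<xi>)"
      using mvt_general[of 0 h \<psi> "\<lambda>t s. s *\<^sub>R D t"] h cont vd
      unfolding has_vector_derivative_def by auto
    have \<xi>': "0 \<le> \<xi>" "\<xi> \<le> h" using \<xi> by auto
    have "D \<xi> = (pd j g ((x + h *\<^sub>R w) + \<xi> *\<^sub>R u) - pd j g x - G' (((x + h *\<^sub>R w) + \<xi> *\<^sub>R u) - x))
              - (pd j g (x + \<xi> *\<^sub>R u) - pd j g x - G' ((x + \<xi> *\<^sub>R u) - x))"
      unfolding D_def using linear_add[OF lin] linear_scale[OF lin] by (simp add: algebra_simps)
    also have "norm \<dots> \<le> (e/4) * norm (((x + h *\<^sub>R w) + \<xi> *\<^sub>R u) - x) + (e/4) * norm ((x + \<xi> *\<^sub>R u) - x)"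
      using d0b[OF nb1[OF \<xi>']] d0b[OF nb2[OF \<xi>']] norm_triangle_ineq4 by (smt (verit))
    also have "\<dots> \<le> (e/4) * (2*h) + (e/4) * h"
    proof -
      have "norm (h *\<^sub>R w + \<xi> *\<^sub>R u) \<le> h + \<xi>"
        using norm_triangle_ineq[of "h *\<^sub>R w" "\<xi> *\<^sub>R u"] nu nw \<xi>' h by simp
      then have "norm (((x + h *\<^sub>R w) + \<xi> *\<^sub>R u) - x) \<le> 2*h" using \<xi>' by (simp add: add.assoc)
      moreover have "norm ((x + \<xi> *\<^sub>R u) - x) \<le> h" using nu \<xi>' by simp
      ultimately show ?thesis using e by (intro add_mono mult_left_mono) auto
    qed
    finally have "norm (D \<xi>) \<le> (e/4) * (2*h) + (e/4) * h" .
    moreover have "0 \<le> e * h" using e h by simp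
    ultimately have "norm (D \<xi>) \<le> e * h" by linarith
    then have "norm ((h - 0) *\<^sub>R D \<xi>) \<le> h * (e * h)" using h by (simp add: mult_left_mono)
    with mv have "norm (\<psi> h - \<psi> 0) \<le> e * (h * h)" by (simp add: algebra_simps)
    moreover have "\<psi> h - \<psi> 0 = g (x + h *\<^sub>R w + h *\<^sub>R u) - g (x + h *\<^sub>R u)
       - g (x + h *\<^sub>R w) + g x - (h * h) *\<^sub>R G' w"
      unfolding \<psi>_def by (simp add: algebra_simps)
    ultimately show ?thesis by simp
  qed
  ultimately show ?thesis unfolding u_def w_def pk by blast
qed


lemma pd_sym:
  fixes g :: "real^3 \<Rightarrow> complex"
  assumes "open S" "x \<in> S" "twice_diff_on g S"
  shows "pd k (pd j g) x = pd j (pd k g) x"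
proof -
  obtain r where r: "r > 0" "ball x r \<subseteq> S" using assms(1,2) open_contains_ball by blast
  have Sd: "\<And>y. y \<in> ball x r \<Longrightarrow> g differentiable (at y)"
    using r assms(3) unfolding twice_diff_on_def by blast
  have Gj: "pd j g differentiable (at x)" and Gk: "pd k g differentiable (at x)"
    using assms(2,3) unfolding twice_diff_on_def by blast+
  define A where "A = pd k (pd j g) x"
  define B where "B = pd j (pd k g) x"
  have key: "norm (A - B) \<le> 2 * e" if e: "e > 0" for e
  proof -
    obtain d1 where d1: "d1 > 0" and H1: "\<And>h. 0 < h \<Longrightarrow> h < d1 \<Longrightarrow>
     norm (g (x + h *\<^sub>R axis k 1 + h *\<^sub>R axis j 1) - g (x + h *\<^sub>R axis j 1)
       - g (x + h *\<^sub>R axis k 1) + g x - (h * h) *\<^sub>R A) \<le> e * (h * h)"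
      using young_half[OF Sd r(1) Gj e, of k] unfolding A_def by blast
    obtain d2 where d2: "d2 > 0" and H2: "\<And>h. 0 < h \<Longrightarrow> h < d2 \<Longrightarrow>
     norm (g (x + h *\<^sub>R axis j 1 + h *\<^sub>R axis k 1) - g (x + h *\<^sub>R axis k 1)
       - g (x + h *\<^sub>R axis j 1) + g x - (h * h) *\<^sub>R B) \<le> e * (h * h)"
      using young_half[OF Sd r(1) Gk e, of j] unfolding B_def by blast
    define h where "h = min d1 d2 / 2"
    have h: "0 < h" "h < d1" "h < d2" using d1 d2 by (auto simp: h_def)
    define \<Delta> where "\<Delta> = g (x + h *\<^sub>R axis k 1 + h *\<^sub>R axis j 1) - g (x + h *\<^sub>R axis j 1)
       - g (x + h *\<^sub>R axis k 1) + g x"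
    have eq: "g (x + h *\<^sub>R axis j 1 + h *\<^sub>R axis k 1) - g (x + h *\<^sub>R axis k 1)
       - g (x + h *\<^sub>R axis j 1) + g x = \<Delta>"
      unfolding \<Delta>_def by (simp add: add_ac)
    have n1: "norm (\<Delta> - (h * h) *\<^sub>R A) \<le> e * (h * h)" using H1[OF h(1,2)] unfolding \<Delta>_def .
    have n2: "norm (\<Delta> - (h * h) *\<^sub>R B) \<le> e * (h * h)" using H2[OF h(1,3)] unfolding eq .
    have "(h * h) *\<^sub>R (A - B) = (\<Delta> - (h * h) *\<^sub>R B) - (\<Delta> - (h * h) *\<^sub>R A)"
      by (simp add: algebra_simps)
    then have "norm ((h * h) *\<^sub>R (A - B)) \<le> 2 * e * (h * h)"
      using n1 n2 norm_triangle_ineq4[of "\<Delta> - (h * h) *\<^sub>R B" "\<Delta> - (h * h) *\<^sub>R A"] by simp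
    moreover have "norm ((h * h) *\<^sub>R (A - B)) = (h * h) * norm (A - B)" using h by simp
    ultimately have "(h * h) * norm (A - B) \<le> (h * h) * (2 * e)" by (simp add: algebra_simps)
    then show ?thesis using h by (simp add: mult_le_cancel_left_pos)
  qed
  show ?thesis
  proof (rule ccontr)
    assume "pd k (pd j g) x \<noteq> pd j (pd k g) x"
    then have "norm (A - B) > 0" unfolding A_def B_def by simp
    with key[of "norm (A - B) / 4"] show False by simp
  qed
qed


lemma MT_scal: "MT (scal g) y = BQ 0 (pd 1 g y) (pd 2 g y) (pd 3 g y)"
  unfolding MT_def pdq_def scal_def bq_mult_def bq_add_def i1_def i2_def i3_def by simp

theorem proposition1:
  fixes \<Omega> :: "(real^3) set" and \<phi> \<psi> :: "real^3 \<Rightarrow> complex"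
  assumes "open \<Omega>" and "connected \<Omega>"
    and "twice_diff_on \<phi> \<Omega>" and "\<forall>x\<in>\<Omega>. \<phi> x \<noteq> 0"
    and "twice_diff_on \<psi> \<Omega>"
    and "\<forall>x\<in>\<Omega>. - lap \<psi> x + (lap \<phi> x / \<phi> x) * \<psi> x = 0"
  defines "\<alpha> \<equiv> \<lambda>x. bq_scale (1 / \<phi> x) (MT (scal \<phi>) x)"
  defines "f \<equiv> \<lambda>x. bq_sub (MT (scal \<psi>) x) (bq_scale (\<psi> x) (\<alpha> x))"
  shows "\<forall>x\<in>\<Omega>. bq_add (MT f x) (Mright (\<alpha> x) (f x)) = bq_zero"
proof
  fix x assume x: "x \<in> \<Omega>"
  have p0: "\<phi> x \<noteq> 0" using assms(4) x by blast
  have dphi: "\<phi> differentiable (at x)" "\<And>k. pd k \<phi> differentiable (at x)"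
    using assms(3) x unfolding twice_diff_on_def by blast+
  have dpsi: "\<psi> differentiable (at x)" "\<And>k. pd k \<psi> differentiable (at x)"
    using assms(5) x unfolding twice_diff_on_def by blast+
  have symphi: "\<And>j k. pd k (pd j \<phi>) x = pd j (pd k \<phi>) x" using pd_sym[OF assms(1) x assms(3)] .
  have sympsi: "\<And>j k. pd k (pd j \<psi>) x = pd j (pd k \<psi>) x" using pd_sym[OF assms(1) x assms(5)] .
  have lapx: "- lap \<psi> x + (lap \<phi> x / \<phi> x) * \<psi> x = 0" using assms(6) x by blast
  define F where "F j y = pd j \<psi> y - \<psi> y * (pd j \<phi> y / \<phi> y)" for j :: 3 and y
  have fe: "f = (\<lambda>y. BQ 0 (F 1 y) (F 2 y) (F 3 y))"
    unfolding f_def \<alpha>_def F_def by (rule ext) (simp add: MT_scal bq_sub_def bq_scale_def)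
  have ae: "\<alpha> x = BQ 0 (pd 1 \<phi> x / \<phi> x) (pd 2 \<phi> x / \<phi> x) (pd 3 \<phi> x / \<phi> x)"
    unfolding \<alpha>_def by (simp add: MT_scal bq_scale_def)
  have dF: "pd k (F j) x = pd k (pd j \<psi>) x -
      (\<psi> x * ((pd k (pd j \<phi>) x * \<phi> x - pd j \<phi> x * pd k \<phi> x) / (\<phi> x * \<phi> x))
       + pd k \<psi> x * (pd j \<phi> x / \<phi> x))" for j k
  proof -
    have "pd k (F j) x = pd k (pd j \<psi>) x - pd k (\<lambda>y. \<psi> y * (pd j \<phi> y / \<phi> y)) x"
      unfolding F_def by (rule pd_diff) (use dphi dpsi p0 in auto)
    also have "pd k (\<lambda>y. \<psi> y * (pd j \<phi> y / \<phi> y)) x =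
       \<psi> x * pd k (\<lambda>y. pd j \<phi> y / \<phi> y) x + pd k \<psi> x * (pd j \<phi> x / \<phi> x)"
      by (rule pd_mult) (use dphi dpsi p0 in auto)
    also have "pd k (\<lambda>y. pd j \<phi> y / \<phi> y) x = (pd k (pd j \<phi>) x * \<phi> x - pd j \<phi> x * pd k \<phi> x) / (\<phi> x * \<phi> x)"
      by (rule pd_divide) (use dphi dpsi p0 in auto)
    finally show ?thesis .
  qed
  have MTf: "MT f x = bq_add (bq_mult i1 (BQ 0 (pd 1 (F 1) x) (pd 1 (F 2) x) (pd 1 (F 3) x)))
              (bq_add (bq_mult i2 (BQ 0 (pd 2 (F 1) x) (pd 2 (F 2) x) (pd 2 (F 3) x)))
                 (bq_mult i3 (BQ 0 (pd 3 (F 1) x) (pd 3 (F 2) x) (pd 3 (F 3) x))))"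
    unfolding MT_def pdq_def fe by simp
  show "bq_add (MT f x) (Mright (\<alpha> x) (f x)) = bq_zero"
    unfolding MTf ae dF Mright_def
    apply (simp add: fe bq_add_def bq_mult_def i1_def i2_def i3_def bq_zero_def F_def)
    apply (intro conjI)
    subgoal
      apply (rule trans[OF _ lapx])
      unfolding lap_def using p0 by (simp add: field_simps)
    subgoal using p0 by (simp add: field_simps symphi[of 2 3] sympsi[of 2 3])
    subgoal using p0 by (simp add: field_simps symphi[of 3 1] sympsi[of 3 1])
    subgoal using p0 by (simp add: field_simps symphi[of 1 2] sympsi[of 1 2])
    done
qed

end
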